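(* Let $(S,<_S)$ be a well-founded order which does not embed $R_{2,2}$. The following are equivalent: (1) $(S,<_S)$ does not embed $S_{\omega,2}$; (2) $(D(S),\subsetneq)$ is well-founded; (3) $(\mathrm{CU}(S),\subsetneq)$ is well-founded.
   Context: An order $(S,<_S)$ is a set with a strict partial order (antisymmetric, transitive). An embedding of $(S,<_S)$ into $(R,<_R)$ is an injection $\pi$ with $x<_S y\iff\pi(x)<_R\pi(y)$. $R_{2,2}$ is the order on $\{x_0,x_1,y_0,y_1\}$ whose only relations are $x_0<y_0$, $x_1<y_1$. $S_{\omega,2}$ is the order on $\{x_n\}_{n<\omega}\uplus\{y_n\}_{n<\omega}$ whose relations are exactly $x_m<y_n$ for $m\geq n$. For $x\in S$: $d(x)=\{z\mid z<_S x\}$, $u(x)=\{z\mid x<_S z\}$, $\mathrm{cu}(x)=S\setminus u(x)$; $D(S)=\{d(x)\mid x\in S\}$ and $\mathrm{CU}(S)=\{\mathrm{cu}(x)\mid x\in S\}$. *)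

theory Defs
  imports Main
begin

definition strict_order_on :: "'a set \<Rightarrow> ('a \<Rightarrow> 'a \<Rightarrow> bool) \<Rightarrow> bool" where
  "strict_order_on S lt \<longleftrightarrow>
     (\<forall>x\<in>S. \<not> lt x x) \<and>
     (\<forall>x\<in>S. \<forall>y\<in>S. \<forall>z\<in>S. lt x y \<longrightarrow> lt y z \<longrightarrow> lt x z)"

definition wf_on_set :: "'a set \<Rightarrow> ('a \<Rightarrow> 'a \<Rightarrow> bool) \<Rightarrow> bool" where
  "wf_on_set S lt \<longleftrightarrow> wfP (\<lambda>x y. x \<in> S \<and> y \<in> S \<and> lt x y)"

definition embeds_via :: "'a set \<Rightarrow> ('a \<Rightarrow> 'a \<Rightarrow> bool) \<Rightarrow> 'b set \<Rightarrow> ('b \<Rightarrow> 'b \<Rightarrow> bool)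
    \<Rightarrow> ('a \<Rightarrow> 'b) \<Rightarrow> bool" where
  "embeds_via S ltS R ltR \<pi> \<longleftrightarrow>
     \<pi> ` S \<subseteq> R \<and> inj_on \<pi> S \<and>
     (\<forall>x\<in>S. \<forall>y\<in>S. ltS x y \<longleftrightarrow> ltR (\<pi> x) (\<pi> y))"

definition embeds :: "'a set \<Rightarrow> ('a \<Rightarrow> 'a \<Rightarrow> bool) \<Rightarrow> 'b set \<Rightarrow> ('b \<Rightarrow> 'b \<Rightarrow> bool) \<Rightarrow> bool" where
  "embeds S ltS R ltR \<longleftrightarrow> (\<exists>\<pi>. embeds_via S ltS R ltR \<pi>)"

(* R_{2,2}: elements x_0 = (False,0), x_1 = (False,1), y_0 = (True,0), y_1 = (True,1);
   only relations x_0 < y_0, x_1 < y_1. *)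
definition R22 :: "(bool \<times> nat) set" where
  "R22 = {(False,0), (False,1), (True,0), (True,1)}"

definition R22_lt :: "bool \<times> nat \<Rightarrow> bool \<times> nat \<Rightarrow> bool" where
  "R22_lt a b \<longleftrightarrow> (\<exists>i\<in>{0,1::nat}. a = (False,i) \<and> b = (True,i))"

(* S_{omega,2}: x_n = Inl n, y_n = Inr n; relations exactly x_m < y_n for m \<ge> n. *)
definition Somega2 :: "(nat + nat) set" where
  "Somega2 = UNIV"

definition Somega2_lt :: "nat + nat \<Rightarrow> nat + nat \<Rightarrow> bool" where
  "Somega2_lt a b \<longleftrightarrow> (\<exists>m n. a = Inl m \<and> b = Inr n \<and> m \<ge> n)"

definition dset :: "'a set \<Rightarrow> ('a \<Rightarrow> 'a \<Rightarrow> bool) \<Rightarrow> 'a \<Rightarrow> 'a set" where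
  "dset S lt x = {z \<in> S. lt z x}"

definition uset :: "'a set \<Rightarrow> ('a \<Rightarrow> 'a \<Rightarrow> bool) \<Rightarrow> 'a \<Rightarrow> 'a set" where
  "uset S lt x = {z \<in> S. lt x z}"

definition cuset :: "'a set \<Rightarrow> ('a \<Rightarrow> 'a \<Rightarrow> bool) \<Rightarrow> 'a \<Rightarrow> 'a set" where
  "cuset S lt x = S - uset S lt x"

definition Dfam :: "'a set \<Rightarrow> ('a \<Rightarrow> 'a \<Rightarrow> bool) \<Rightarrow> 'a set set" where
  "Dfam S lt = dset S lt ` S"

definition CUfam :: "'a set \<Rightarrow> ('a \<Rightarrow> 'a \<Rightarrow> bool) \<Rightarrow> 'a set set" where
  "CUfam S lt = cuset S lt ` S"

end

theory Submission
  imports Defs "HOL-Library.Infinite_Set"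
begin

lemma wfp_chain: "wfP R \<longleftrightarrow> (\<nexists>f. \<forall>i. R (f (Suc i)) (f i))"
  using wf_iff_no_infinite_down_chain[to_pred] by simp

lemma antichain_sub:
  fixes f :: "nat \<Rightarrow> 'a" and J :: "nat set"
  assumes so: "strict_order_on S lt" and wf: "wf_on_set S lt"
    and fS: "\<And>n. f n \<in> S" and J: "infinite J"
    and h: "\<And>i j. i \<in> J \<Longrightarrow> j \<in> J \<Longrightarrow> i < j \<Longrightarrow> \<not> lt (f i) (f j)"
  shows "\<exists>J'\<subseteq>J. infinite J' \<and> (\<forall>i\<in>J'. \<forall>j\<in>J'. \<not> lt (f i) (f j))"
proof -
  define J' where "J' = {j\<in>J. \<forall>k\<in>J. \<not> lt (f k) (f j)}"
  have irr: "\<And>x. x \<in> S \<Longrightarrow> \<not> lt x x" and tr: "\<And>x y z. x \<in> S \<Longrightarrow> y \<in> S \<Longrightarrow> z \<in> S \<Longrightarrow> lt x y \<Longrightarrow> lt y z \<Longrightarrow> lt x z"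
    using so unfolding strict_order_on_def by blast+
  have wfR: "wfP (\<lambda>x y. x \<in> S \<and> y \<in> S \<and> lt x y)" using wf unfolding wf_on_set_def .
  have "\<forall>m. \<exists>n\<ge>m. n \<in> J'"
  proof
    fix m
    obtain j where j: "j \<ge> m" "j \<in> J" using J[unfolded infinite_nat_iff_unbounded_le] by blast
    define Q where "Q = {f k | k. k \<in> J \<and> (k = j \<or> lt (f k) (f j))}"
    have "f j \<in> Q" using j unfolding Q_def by blast
    then obtain z where zQ: "z \<in> Q" and zmin: "\<And>y. y \<in> S \<and> z \<in> S \<and> lt y z \<Longrightarrow> y \<notin> Q"
      using wfR[unfolded wfp_eq_minimal, rule_format, of "f j" Q] by blast
    then obtain k where k: "z = f k" "k \<in> J" "k = j \<or> lt (f k) (f j)" unfolding Q_def by blast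
    have "k \<in> J'"
      unfolding J'_def
    proof (intro CollectI conjI ballI notI)
      show "k \<in> J" by fact
      fix k' assume k': "k' \<in> J" "lt (f k') (f k)"
      have "lt (f k') (f j)" using k(3) k'(2) tr[OF fS[of k'] fS[of k] fS[of j]] by auto
      hence "f k' \<in> Q" unfolding Q_def using k' by blast
      thus False using zmin[of "f k'"] k(1) fS[of k'] fS[of k] k'(2) by blast
    qed
    moreover have "k \<ge> j"
    proof (rule ccontr)
      assume "\<not> k \<ge> j" hence "k < j" by simp
      with h[OF k(2) j(2)] k(3) show False by auto
    qed
    ultimately show "\<exists>n\<ge>m. n \<in> J'" using j by (meson order_trans)
  qed
  hence "infinite J'" by (simp add: infinite_nat_iff_unbounded_le)
  moreover have "\<forall>i\<in>J'. \<forall>j\<in>J'. \<not> lt (f i) (f j)" unfolding J'_def by blast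
  moreover have "J' \<subseteq> J" unfolding J'_def by blast
  ultimately show ?thesis by blast
qed

lemma build_emb:
  fixes x y :: "nat \<Rightarrow> 'a"
  assumes so: "strict_order_on S lt" and wf: "wf_on_set S lt"
    and xS: "\<And>n. x n \<in> S" and yS: "\<And>n. y n \<in> S"
    and rel: "\<And>m n. lt (x m) (y n) \<longleftrightarrow> n \<le> m"
  shows "embeds Somega2 Somega2_lt S lt"
proof -
  have irr: "\<And>x. x \<in> S \<Longrightarrow> \<not> lt x x" and tr: "\<And>x y z. x \<in> S \<Longrightarrow> y \<in> S \<Longrightarrow> z \<in> S \<Longrightarrow> lt x y \<Longrightarrow> lt y z \<Longrightarrow> lt x z"
    using so unfolding strict_order_on_def by blast+
  have hx: "\<And>i j. i < j \<Longrightarrow> \<not> lt (x i) (x j)"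
  proof
    fix i j assume "i < j" "lt (x i) (x j)"
    moreover have "lt (x j) (y j)" using rel[of j j] by simp
    ultimately have "lt (x i) (y j)" using tr[OF xS[of i] xS[of j] yS[of j]] by blast
    with \<open>i<j\<close> rel[of i j] show False by simp
  qed
  have hy: "\<And>i j. i < j \<Longrightarrow> \<not> lt (y i) (y j)"
  proof
    fix i j assume "i < j" "lt (y i) (y j)"
    moreover have "lt (x i) (y i)" using rel[of i i] by simp
    ultimately have "lt (x i) (y j)" using tr[OF xS[of i] yS[of i] yS[of j]] by blast
    with \<open>i<j\<close> rel[of i j] show False by simp
  qed
  obtain J1 where J1: "infinite J1" "\<forall>i\<in>J1. \<forall>j\<in>J1. \<not> lt (x i) (x j)"
  proof -
    have "\<exists>J'\<subseteq>UNIV. infinite J' \<and> (\<forall>i\<in>J'. \<forall>j\<in>J'. \<not> lt (x i) (x j))"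
      by (rule antichain_sub[OF so wf xS infinite_UNIV_nat]) (rule hx)
    thus ?thesis using that by blast
  qed
  obtain J2 where J2: "J2 \<subseteq> J1" "infinite J2" "\<forall>i\<in>J2. \<forall>j\<in>J2. \<not> lt (y i) (y j)"
  proof -
    have "\<exists>J'\<subseteq>J1. infinite J' \<and> (\<forall>i\<in>J'. \<forall>j\<in>J'. \<not> lt (y i) (y j))"
      by (rule antichain_sub[OF so wf yS J1(1)]) (rule hy)
    thus ?thesis using that by blast
  qed
  obtain e :: "nat \<Rightarrow> nat" where e: "strict_mono e" "\<And>n. e n \<in> J2"
    using infinite_enumerate[OF J2(2)] by blast
  have ax: "\<And>i j. \<not> lt (x (e i)) (x (e j))" using J1(2) J2(1) e(2) by blast
  have ay: "\<And>i j. \<not> lt (y (e i)) (y (e j))" using J2(3) e(2) by blast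
  have xinj: "i = j" if "x i = x j" for i j
  proof -
    have "j \<le> i" using rel[of i j] rel[of j j] that by simp
    moreover have "i \<le> j" using rel[of j i] rel[of i i] that by simp
    ultimately show ?thesis by simp
  qed
  have yinj: "i = j" if "y i = y j" for i j
  proof -
    have "j \<le> i" using rel[of i j] rel[of i i] that by simp
    moreover have "i \<le> j" using rel[of j i] rel[of j j] that by simp
    ultimately show ?thesis by simp
  qed
  have einj: "\<And>i j. e i = e j \<Longrightarrow> i = j" using e(1) strict_mono_eq by blast
  have xy: "\<And>i j. x (e i) \<noteq> y (e j)"
  proof
    fix i j assume "x (e i) = y (e j)"
    moreover have "lt (x (e j)) (y (e j))" using rel[of "e j" "e j"] by simp
    ultimately show False using ax[of j i] by simp
  qed
  have yx: "\<And>i j. \<not> lt (y (e i)) (x (e j))"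
  proof
    fix i j assume "lt (y (e i)) (x (e j))"
    moreover have "lt (x (e j)) (y (e j))" using rel[of "e j" "e j"] by simp
    ultimately have "lt (y (e i)) (y (e j))" using tr[OF yS xS yS] by blast
    with ay show False by blast
  qed
  have xy': "\<And>i j. y (e j) \<noteq> x (e i)" using xy by metis
  define \<pi> where "\<pi> = case_sum (\<lambda>k. x (e k)) (\<lambda>k. y (e k))"
  have "embeds_via Somega2 Somega2_lt S lt \<pi>"
    unfolding embeds_via_def
  proof (intro conjI)
    show "\<pi> ` Somega2 \<subseteq> S" unfolding \<pi>_def using xS yS by (auto split: sum.splits)
    show "inj_on \<pi> Somega2"
      unfolding inj_on_def \<pi>_def
    proof (intro ballI impI)
      fix a b :: "nat + nat" assume "case_sum (\<lambda>k. x (e k)) (\<lambda>k. y (e k)) a = case_sum (\<lambda>k. x (e k)) (\<lambda>k. y (e k)) b"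
      thus "a = b" by (cases a; cases b) (auto dest!: xinj yinj einj simp: xy xy')
    qed
    show "\<forall>a\<in>Somega2. \<forall>b\<in>Somega2. Somega2_lt a b = lt (\<pi> a) (\<pi> b)"
    proof (intro ballI)
      fix a b :: "nat + nat"
      show "Somega2_lt a b = lt (\<pi> a) (\<pi> b)"
      proof (cases a)
        case (Inl m)
        show ?thesis
        proof (cases b)
          case (Inl n)
          show ?thesis unfolding \<pi>_def Somega2_lt_def using ax[of m n] \<open>a = Inl m\<close> Inl by simp
        next
          case (Inr n)
          show ?thesis unfolding \<pi>_def Somega2_lt_def
            using rel[of "e m" "e n"] strict_mono_less_eq[OF e(1), of n m] \<open>a = Inl m\<close> Inr by simp
        qed
      next
        case (Inr m)
        show ?thesis
        proof (cases b)
          case (Inl n)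
          show ?thesis unfolding \<pi>_def Somega2_lt_def using yx[of m n] \<open>a = Inr m\<close> Inl by simp
        next
          case (Inr n)
          show ?thesis unfolding \<pi>_def Somega2_lt_def using ay[of m n] \<open>a = Inr m\<close> Inr by simp
        qed
      qed
    qed
  qed
  thus ?thesis unfolding embeds_def by blast
qed

lemma R22_emb:
  assumes so: "strict_order_on S lt"
    and S: "a0 \<in> S" "b0 \<in> S" "a1 \<in> S" "b1 \<in> S"
    and r: "lt a0 b0" "lt a1 b1" "\<not> lt a0 b1" "\<not> lt a1 b0" "\<not> lt a0 a1" "\<not> lt a1 a0"
      "\<not> lt b0 b1" "\<not> lt b1 b0"
  shows "embeds R22 R22_lt S lt"
proof -
  have irr: "\<And>x. x \<in> S \<Longrightarrow> \<not> lt x x" and tr: "\<And>x y z. x \<in> S \<Longrightarrow> y \<in> S \<Longrightarrow> z \<in> S \<Longrightarrow> lt x y \<Longrightarrow> lt y z \<Longrightarrow> lt x z"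
    using so unfolding strict_order_on_def by blast+
  have n1: "\<not> lt b0 a0" using irr tr S r by metis
  have n2: "\<not> lt b1 a1" using irr tr S r by metis
  have n3: "\<not> lt b0 a1" using irr tr S r by metis
  have n4: "\<not> lt b1 a0" using irr tr S r by metis
  have d: "a0 \<noteq> b0" "a0 \<noteq> a1" "a0 \<noteq> b1" "b0 \<noteq> a1" "b0 \<noteq> b1" "a1 \<noteq> b1"
    using irr S r by metis+
  define \<pi> where "\<pi> = (\<lambda>p::bool\<times>nat. if p = (False,0) then a0 else if p = (True,0) then b0
      else if p = (False,1) then a1 else b1)"
  have "embeds_via R22 R22_lt S lt \<pi>"
    unfolding embeds_via_def R22_def
  proof (intro conjI)
    show "\<pi> ` {(False, 0), (False, 1), (True, 0), (True, 1)} \<subseteq> S" using S by (auto simp: \<pi>_def)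
    show "inj_on \<pi> {(False, 0), (False, 1), (True, 0), (True, 1)}"
      using d by (auto simp: \<pi>_def inj_on_def)
    show "\<forall>x\<in>{(False, 0), (False, 1), (True, 0), (True, 1)}. \<forall>y\<in>{(False, 0), (False, 1), (True, 0), (True, 1)}.
        R22_lt x y = lt (\<pi> x) (\<pi> y)"
      using r n1 n2 n3 n4 irr S by (auto simp: \<pi>_def R22_lt_def)
  qed
  thus ?thesis unfolding embeds_def by blast
qed

theorem lemma2p6:
  fixes S :: "'a set" and lt :: "'a \<Rightarrow> 'a \<Rightarrow> bool"
  assumes "strict_order_on S lt"
    and "wf_on_set S lt"
    and "\<not> embeds R22 R22_lt S lt"
  shows "(\<not> embeds Somega2 Somega2_lt S lt \<longleftrightarrow> wf_on_set (Dfam S lt) (\<subset>))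
       \<and> (wf_on_set (Dfam S lt) (\<subset>) \<longleftrightarrow> wf_on_set (CUfam S lt) (\<subset>))"
proof -
  note so = assms(1) and wf = assms(2) and noR = assms(3)
  have irr: "\<And>x. x \<in> S \<Longrightarrow> \<not> lt x x" and tr: "\<And>x y z. x \<in> S \<Longrightarrow> y \<in> S \<Longrightarrow> z \<in> S \<Longrightarrow> lt x y \<Longrightarrow> lt y z \<Longrightarrow> lt x z"
    using so unfolding strict_order_on_def by blast+
  have A: "embeds Somega2 Somega2_lt S lt" if nwf: "\<not> wf_on_set (Dfam S lt) (\<subset>)"
  proof -
    obtain F where F: "\<And>i. F i \<in> Dfam S lt" "\<And>i. F (Suc i) \<subset> F i"
      using nwf[unfolded wf_on_set_def wfp_chain] by blast
    have "\<forall>i. \<exists>c. c \<in> S \<and> F i = dset S lt c" using F(1) unfolding Dfam_def by blast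
    then obtain b where bS: "\<And>i. b i \<in> S" and bF: "\<And>i. F i = dset S lt (b i)"
      by metis
    have mono: "F m \<subseteq> F n" if "n \<le> m" for n m
      using that
    proof (induction m)
      case 0 thus ?case by simp
    next
      case (Suc m) thus ?case using F(2)[of m] by (metis le_Suc_eq order.refl psubset_imp_subset order_trans)
    qed
    have "\<forall>n. \<exists>a. a \<in> F n \<and> a \<notin> F (Suc n)" using F(2) by blast
    then obtain a where a: "\<And>n. a n \<in> F n" "\<And>n. a n \<notin> F (Suc n)" by metis
    have aS: "\<And>n. a n \<in> S" using a(1) bF unfolding dset_def by blast
    show ?thesis
    proof (rule build_emb[OF so wf aS bS])
      fix m n
      show "lt (a m) (b n) \<longleftrightarrow> n \<le> m"
      proof
        assume "lt (a m) (b n)"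
        hence "a m \<in> F n" using bF aS unfolding dset_def by blast
        show "n \<le> m"
        proof (rule ccontr)
          assume "\<not> n \<le> m"
          hence "F n \<subseteq> F (Suc m)" using mono by simp
          thus False using a(2) \<open>a m \<in> F n\<close> by blast
        qed
      next
        assume "n \<le> m" thus "lt (a m) (b n)" using mono a(1) bF unfolding dset_def by blast
      qed
    qed
  qed
  have B: "embeds Somega2 Somega2_lt S lt" if nwf: "\<not> wf_on_set (CUfam S lt) (\<subset>)"
  proof -
    obtain F where F: "\<And>i. F i \<in> CUfam S lt" "\<And>i. F (Suc i) \<subset> F i"
      using nwf[unfolded wf_on_set_def wfp_chain] by blast
    have "\<forall>i. \<exists>c. c \<in> S \<and> F i = cuset S lt c" using F(1) unfolding CUfam_def by blast
    then obtain b where bS: "\<And>i. b i \<in> S" and bF: "\<And>i. F i = cuset S lt (b i)"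
      by metis
    define U where "U i = uset S lt (b i)" for i
    have US: "U i \<subseteq> S" for i unfolding U_def uset_def by auto
    have FU: "F i = S - U i" for i unfolding bF U_def cuset_def ..
    have U2: "U i \<subset> U (Suc i)" for i
      using F(2)[of i] US[of i] US[of "Suc i"] unfolding FU by blast
    have mono: "U n \<subseteq> U m" if "n \<le> m" for n m
      using that
    proof (induction m)
      case 0 thus ?case by simp
    next
      case (Suc m) thus ?case using U2[of m] by (metis le_Suc_eq order.refl psubset_imp_subset order_trans)
    qed
    have "\<forall>n. \<exists>c. c \<in> U (Suc n) \<and> c \<notin> U n" using U2 by blast
    then obtain c where c: "\<And>n. c n \<in> U (Suc n)" "\<And>n. c n \<notin> U n" by metis
    have cS: "\<And>n. c n \<in> S" using c(1) US by blast
    have bS': "\<And>n. b (Suc n) \<in> S" using bS by blast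
    show ?thesis
    proof (rule build_emb[OF so wf bS' cS])
      fix m n
      show "lt (b (Suc m)) (c n) \<longleftrightarrow> n \<le> m"
      proof
        assume "lt (b (Suc m)) (c n)"
        hence "c n \<in> U (Suc m)" using cS unfolding U_def uset_def by blast
        show "n \<le> m"
        proof (rule ccontr)
          assume "\<not> n \<le> m"
          hence "U (Suc m) \<subseteq> U n" using mono by simp
          thus False using c(2) \<open>c n \<in> U (Suc m)\<close> by blast
        qed
      next
        assume "n \<le> m" hence "U (Suc n) \<subseteq> U (Suc m)" using mono by simp
        thus "lt (b (Suc m)) (c n)" using c(1) unfolding U_def uset_def by blast
      qed
    qed
  qed
  have C: "\<not> wf_on_set (Dfam S lt) (\<subset>) \<and> \<not> wf_on_set (CUfam S lt) (\<subset>)"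
    if emb: "embeds Somega2 Somega2_lt S lt"
  proof -
    obtain \<pi> where \<pi>: "embeds_via Somega2 Somega2_lt S lt \<pi>" using emb unfolding embeds_def by blast
    define x where "x n = \<pi> (Inl n)" for n
    define y where "y n = \<pi> (Inr n)" for n
    have xS: "x n \<in> S" and yS: "y n \<in> S" for n
      using \<pi> unfolding embeds_via_def Somega2_def x_def y_def by auto
    have lt_iff: "\<And>a b. Somega2_lt a b \<longleftrightarrow> lt (\<pi> a) (\<pi> b)"
      using \<pi> unfolding embeds_via_def Somega2_def by auto
    have xy: "lt (x m) (y n) \<longleftrightarrow> n \<le> m" for m n
      using lt_iff[of "Inl m" "Inr n"] unfolding x_def y_def Somega2_lt_def by auto
    have xx: "\<not> lt (x m) (x n)" for m n
      using lt_iff[of "Inl m" "Inl n"] unfolding x_def y_def Somega2_lt_def by auto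
    have yy: "\<not> lt (y m) (y n)" for m n
      using lt_iff[of "Inr m" "Inr n"] unfolding x_def y_def Somega2_lt_def by auto
    have yx: "\<not> lt (y m) (x n)" for m n
      using lt_iff[of "Inr m" "Inl n"] unfolding x_def y_def Somega2_lt_def by auto
    have D1: "dset S lt (y (Suc n)) \<subset> dset S lt (y n)" for n
    proof
      show "dset S lt (y (Suc n)) \<subseteq> dset S lt (y n)"
      proof
        fix z assume z: "z \<in> dset S lt (y (Suc n))"
        hence zS: "z \<in> S" and zl: "lt z (y (Suc n))" unfolding dset_def by auto
        show "z \<in> dset S lt (y n)"
        proof (rule ccontr)
          assume "z \<notin> dset S lt (y n)"
          hence nz: "\<not> lt z (y n)" using zS unfolding dset_def by auto
          have "\<not> lt (x n) z" using tr[OF xS zS yS] zl xy by (metis Suc_n_not_le_n)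
          moreover have "\<not> lt z (x n)" using tr[OF zS xS yS] nz xy by blast
          ultimately have "embeds R22 R22_lt S lt"
            using R22_emb[OF so xS[of n] yS[of n] zS yS[of "Suc n"]] xy nz zl yy by auto
          thus False using noR by blast
        qed
      qed
      have "x n \<in> dset S lt (y n)" "x n \<notin> dset S lt (y (Suc n))"
        using xy xS unfolding dset_def by auto
      thus "dset S lt (y (Suc n)) \<noteq> dset S lt (y n)" by blast
    qed
    have CU1: "cuset S lt (x (Suc n)) \<subset> cuset S lt (x n)" for n
    proof -
      have "uset S lt (x n) \<subset> uset S lt (x (Suc n))"
      proof
        show "uset S lt (x n) \<subseteq> uset S lt (x (Suc n))"
        proof
          fix z assume z: "z \<in> uset S lt (x n)"
          hence zS: "z \<in> S" and zl: "lt (x n) z" unfolding uset_def by auto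
          show "z \<in> uset S lt (x (Suc n))"
          proof (rule ccontr)
            assume "z \<notin> uset S lt (x (Suc n))"
            hence nz: "\<not> lt (x (Suc n)) z" using zS unfolding uset_def by auto
            have "\<not> lt z (y (Suc n))" using tr[OF xS zS yS] zl xy by (metis Suc_n_not_le_n)
            moreover have "\<not> lt (y (Suc n)) z" using tr[OF xS yS zS] nz xy by blast
            moreover have "\<not> lt z (x (Suc n))" using tr[OF xS zS xS] zl xx by blast
            ultimately have "embeds R22 R22_lt S lt"
              using R22_emb[OF so xS[of n] zS xS[of "Suc n"] yS[of "Suc n"]] xy nz zl xx by auto
            thus False using noR by blast
          qed
        qed
        have "y (Suc n) \<in> uset S lt (x (Suc n))" "y (Suc n) \<notin> uset S lt (x n)"
          using xy yS unfolding uset_def by auto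
        thus "uset S lt (x n) \<noteq> uset S lt (x (Suc n))" by blast
      qed
      moreover have "uset S lt (x k) \<subseteq> S" for k unfolding uset_def by auto
      ultimately show ?thesis unfolding cuset_def by blast
    qed
    have Dm: "\<And>i. dset S lt (y i) \<in> Dfam S lt" unfolding Dfam_def using yS by blast
    have CUm: "\<And>i. cuset S lt (x i) \<in> CUfam S lt" unfolding CUfam_def using xS by blast
    have "\<not> wf_on_set (Dfam S lt) (\<subset>)"
      unfolding wf_on_set_def wfp_chain not_not
      by (rule exI[of _ "\<lambda>i. dset S lt (y i)"]) (simp add: Dm D1)
    moreover have "\<not> wf_on_set (CUfam S lt) (\<subset>)"
      unfolding wf_on_set_def wfp_chain not_not
      by (rule exI[of _ "\<lambda>i. cuset S lt (x i)"]) (simp add: CUm CU1)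
    ultimately show ?thesis by blast
  qed
  show ?thesis using A B C by blast
qed

end
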